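(* Let $N$ be a nonnegative integer and let $a,b,d,f\in\mathbb{C}$ be such that every hypergeometric series below is well defined (no lower parameter is a nonpositive integer) and the denominator $f(a-f)-db$ is nonzero. Put $$g=\frac{f(b+d-a)(f-a)}{f(a-f)-db}.$$ Then $$ {}_{7}F_{6}\left[\begin{matrix} a,\ 1+\frac{a}{2},\ b,\ a-f+1,\ d,\ f+1,\ -N\\ \frac{a}{2},\ 1+a-b,\ f,\ 1+a-d,\ a-f,\ 1+a+N\end{matrix};1\right]=\frac{(1+a)_N\,(a-b-d)_N}{(1+a-b)_N\,(1+a-d)_N}\cdot\frac{(g+1)_N}{(g)_N}.$$
   Context: $(x)_n$ denotes the Pochhammer symbol: $(x)_0=1$, $(x)_n=x(x+1)\cdots(x+n-1)$ for $n\ge1$. The generalized hypergeometric function is $${}_{r+1}F_{r}\left[\begin{matrix} a_1,\dots,a_{r+1}\\ b_1,\dots,b_r\end{matrix};z\right]=\sum_{n=0}^{\infty}\frac{(a_1)_n\cdots(a_{r+1})_n}{(b_1)_n\cdots(b_r)_n\,n!}z^n ,$$ where no $b_i$ is a nonpositive integer; when one upper parameter equals $-N$ with $N$ a nonnegative integer the series terminates. *)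

theory Defs
  imports Complex_Main "HOL-Library.Nonpos_Ints"
begin

definition hypergeom :: "complex list \<Rightarrow> complex list \<Rightarrow> complex \<Rightarrow> complex" where
  "hypergeom as bs z =
     (\<Sum>n. prod_list (map (\<lambda>a. pochhammer a n) as) / prod_list (map (\<lambda>b. pochhammer b n) bs)
            * z ^ n / fact n)"

end

theory Submission
  imports Defs
begin

definition UU :: "complex \<Rightarrow> complex \<Rightarrow> complex \<Rightarrow> nat \<Rightarrow> nat \<Rightarrow> complex" where
 "UU a b d N n = pochhammer a n * pochhammer b n * pochhammer d n * pochhammer (- of_nat N) n /
     (pochhammer (1+a-b) n * pochhammer (1+a-d) n * pochhammer (1+a+of_nat N) n * fact n)"

definition TT :: "complex \<Rightarrow> complex \<Rightarrow> complex \<Rightarrow> nat \<Rightarrow> nat \<Rightarrow> complex" where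
 "TT a b d N n = UU a b d N n * (a + 2 * of_nat n) / a"

definition HH :: "complex \<Rightarrow> complex \<Rightarrow> complex \<Rightarrow> nat \<Rightarrow> nat \<Rightarrow> complex" where
 "HH a b d N n = - UU a b d (Suc N) n * of_nat n * (of_nat n + a - b) * (of_nat n + a - d)
     * (1 + a + of_nat N + of_nat n) / (a * (of_nat N + 1))"

lemma UU_Suc:
  "UU a b d M (Suc n) = UU a b d M n * ((a + of_nat n) * (b + of_nat n) * (d + of_nat n) * (- of_nat M + of_nat n))
     / ((1+a-b + of_nat n) * (1+a-d + of_nat n) * (1 + a + of_nat M + of_nat n) * (of_nat n + 1))"
  unfolding UU_def pochhammer_Suc fact_Suc of_nat_Suc
  by (simp only: divide_inverse inverse_mult_distrib mult_ac add_ac)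

lemma poch_shift: "x * pochhammer (x+1) n = (x + of_nat n) * pochhammer (x::complex) n"
  by (metis pochhammer_rec pochhammer_rec')

lemma UU_down:
  assumes "pochhammer (1+a+of_nat N) n \<noteq> 0" "1 + a + of_nat N \<noteq> 0" "1 + a + of_nat N + of_nat n \<noteq> 0"
  shows "UU a b d N n = UU a b d (Suc N) n * ((of_nat N + 1 - of_nat n) * (1 + a + of_nat N + of_nat n))
            / ((of_nat N + 1) * (1 + a + of_nat N))"
proof -
  have e1: "(- (of_nat N + 1::complex)) * pochhammer (- of_nat N) n = (- (of_nat N + 1) + of_nat n) * pochhammer (- (of_nat N + 1)) n"
    using poch_shift[of "- (of_nat N + 1)" n] by simp
  have e2: "(1+a+of_nat N) * pochhammer (1+a+of_nat N + 1) n = (1+a+of_nat N + of_nat n) * pochhammer (1+a+of_nat N) n"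
    using poch_shift[of "1+a+of_nat N" n] by simp
  have p2: "pochhammer (1+a+of_nat N + 1) n \<noteq> 0"
    using e2 assms by auto
  have e1': "pochhammer (- of_nat N::complex) n = pochhammer (- (of_nat N + 1)) n * (of_nat N + 1 - of_nat n) / (of_nat N + 1)"
  proof -
    have N1: "(of_nat N + 1::complex) \<noteq> 0" by (metis of_nat_Suc of_nat_eq_0_iff nat.distinct(1) add.commute)
    have "pochhammer (- of_nat N::complex) n * (of_nat N + 1) = pochhammer (- (of_nat N + 1)) n * (of_nat N + 1 - of_nat n)"
      using e1 by algebra
    then show ?thesis using N1 by (simp add: eq_divide_eq)
  qed
  have e2': "inverse (pochhammer (1+a+of_nat N) n) = (1+a+of_nat N + of_nat n) * inverse ((1+a+of_nat N) * pochhammer (1+a+of_nat N + 1) n)"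
    unfolding e2 using assms(3) by (simp add: inverse_mult_distrib)
  have h: "UU a b d (Suc N) n = pochhammer a n * pochhammer b n * pochhammer d n * pochhammer (- (of_nat N + 1)) n /
     (pochhammer (1+a-b) n * pochhammer (1+a-d) n * pochhammer (1+a+of_nat N + 1) n * fact n)"
    by (simp add: UU_def add_ac)
  show ?thesis
    unfolding h unfolding UU_def
    by (simp only: divide_inverse inverse_mult_distrib e1' e2' mult_ac)
qed

lemma alg_id:
  fixes V a b d x y :: complex
  assumes "a \<noteq> 0" "y + 1 \<noteq> 0" "1 + a + y \<noteq> 0"
  shows "(1+a-b+y)*(1+a-d+y) * (V*(a+2*x)/a) - (1+a+y)*(1+a-b-d+y) * (V*((y+1-x)*(1+a+y+x))/((y+1)*(1+a+y))*(a+2*x)/a)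
    = (- V*((a+x)*(b+x)*(d+x)*(x-y-1))/(a*(y+1))) - (- V*x*(x+a-b)*(x+a-d)*(1+a+y+x)/(a*(y+1)))"
proof -
  have e: "(1+a-b+y)*(1+a-d+y) * (a+2*x) * (y+1) - (1+a-b-d+y) * ((y+1-x)*(1+a+y+x)) * (a+2*x)
      = - ((a+x)*(b+x)*(d+x)*(x-y-1)) + x*(x+a-b)*(x+a-d)*(1+a+y+x)"
    by algebra
  have l: "(1+a-b+y)*(1+a-d+y) * (V*(a+2*x)/a) - (1+a+y)*(1+a-b-d+y) * (V*((y+1-x)*(1+a+y+x))/((y+1)*(1+a+y))*(a+2*x)/a)
     = V/(a*(y+1)) * ((1+a-b+y)*(1+a-d+y) * (a+2*x) * (y+1) - (1+a-b-d+y) * ((y+1-x)*(1+a+y+x)) * (a+2*x))"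
    using assms by (simp add: divide_simps) algebra
  have r: "(- V*((a+x)*(b+x)*(d+x)*(x-y-1))/(a*(y+1))) - (- V*x*(x+a-b)*(x+a-d)*(1+a+y+x)/(a*(y+1)))
     = V/(a*(y+1)) * (- ((a+x)*(b+x)*(d+x)*(x-y-1)) + x*(x+a-b)*(x+a-d)*(1+a+y+x))"
    using assms by (simp add: divide_simps) algebra
  show ?thesis unfolding l r e ..
qed

lemma local_id:
  assumes a0: "a \<noteq> 0" and nb: "1+a-b+of_nat n \<noteq> 0" and nd: "1+a-d+of_nat n \<noteq> 0"
    and nk: "1+a+of_nat N+1+of_nat n \<noteq> 0" and pk: "pochhammer (1+a+of_nat N) n \<noteq> 0"
    and k0: "1+a+of_nat N \<noteq> 0" and kn: "1+a+of_nat N+of_nat n \<noteq> 0"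
  shows "(1+a-b+of_nat N)*(1+a-d+of_nat N) * TT a b d (Suc N) n - (1+a+of_nat N)*(1+a-b-d+of_nat N) * TT a b d N n
         = HH a b d N (Suc n) - HH a b d N n"
proof -
  define V where "V = UU a b d (Suc N) n"
  define X where "X = (a + of_nat n) * (b + of_nat n) * (d + of_nat n) * (- of_nat (Suc N) + of_nat n)"
  define Y where "Y = (1+a-b + of_nat n) * (1+a-d + of_nat n) * (1 + a + of_nat (Suc N) + of_nat n) * (of_nat n + 1)"
  have n1: "(of_nat n + 1 :: complex) \<noteq> 0" by (metis of_nat_Suc of_nat_eq_0_iff nat.distinct(1) add.commute)
  have N1: "(of_nat N + 1 :: complex) \<noteq> 0" by (metis of_nat_Suc of_nat_eq_0_iff nat.distinct(1) add.commute)
  have Y0: "Y \<noteq> 0" unfolding Y_def using nb nd nk n1 by (simp add: add_ac)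
  have Yeq: "of_nat (Suc n) * (of_nat (Suc n) + a - b) * (of_nat (Suc n) + a - d) * (1 + a + of_nat N + of_nat (Suc n)) = Y"
    unfolding Y_def by (simp add: algebra_simps)
  have "HH a b d N (Suc n) = - UU a b d (Suc N) (Suc n) * (of_nat (Suc n) * (of_nat (Suc n) + a - b) * (of_nat (Suc n) + a - d) * (1 + a + of_nat N + of_nat (Suc n))) / (a * (of_nat N + 1))"
    unfolding HH_def by (simp only: mult.assoc)
  also have "\<dots> = - (V * X / Y) * Y / (a * (of_nat N + 1))"
    unfolding Yeq V_def X_def Y_def UU_Suc ..
  also have "\<dots> = - V * X / (a*(of_nat N+1))"
    using Y0 by simp
  also have "X = ((a+of_nat n)*(b+of_nat n)*(d+of_nat n)*(of_nat n - of_nat N - 1))"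
    unfolding X_def by (simp add: algebra_simps)
  finally have hs: "HH a b d N (Suc n) = - V * ((a+of_nat n)*(b+of_nat n)*(d+of_nat n)*(of_nat n - of_nat N - 1)) / (a*(of_nat N+1))" .
  have h0: "HH a b d N n = - V * of_nat n * (of_nat n + a - b) * (of_nat n + a - d)
     * (1 + a + of_nat N + of_nat n) / (a * (of_nat N + 1))"
    unfolding HH_def V_def ..
  have t1: "TT a b d (Suc N) n = V * (a + 2 * of_nat n) / a" unfolding TT_def V_def ..
  have t0: "TT a b d N n = V * ((of_nat N + 1 - of_nat n) * (1 + a + of_nat N + of_nat n))
            / ((of_nat N + 1) * (1 + a + of_nat N)) * (a + 2 * of_nat n) / a"
    unfolding TT_def V_def using UU_down[OF pk k0 kn] by simp
  show ?thesis
    unfolding hs h0 t1 t0 using alg_id[where V=V and a=a and b=b and d=d and x="of_nat n" and y="of_nat N", OF a0 N1 k0] by (simp add: add_ac)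
qed

lemma UU_vanish: "N < n \<Longrightarrow> UU a b d N n = 0"
  unfolding UU_def by (simp add: pochhammer_of_nat_eq_0_lemma)

lemma TT_vanish: "N < n \<Longrightarrow> TT a b d N n = 0"
  unfolding TT_def by (simp add: UU_vanish)

lemma recur:
  assumes a0: "a \<noteq> 0"
    and c: "\<forall>j\<le>2*N+3. 1+a-b+of_nat j \<noteq> 0 \<and> 1+a-d+of_nat j \<noteq> 0 \<and> 1+a+of_nat j \<noteq> 0"
  shows "(1+a-b+of_nat N)*(1+a-d+of_nat N) * (\<Sum>n<Suc (Suc N). TT a b d (Suc N) n)
       = (1+a+of_nat N)*(1+a-b-d+of_nat N) * (\<Sum>n<Suc N. TT a b d N n)"
proof -
  have loc: "(1+a-b+of_nat N)*(1+a-d+of_nat N) * TT a b d (Suc N) n - (1+a+of_nat N)*(1+a-b-d+of_nat N) * TT a b d N n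
         = HH a b d N (Suc n) - HH a b d N n" if n: "n < Suc (Suc N)" for n
  proof (rule local_id[OF a0])
    show "1 + a - b + of_nat n \<noteq> 0" using c n by auto
    show "1 + a - d + of_nat n \<noteq> 0" using c n by auto
    have j: "N+1+n \<le> 2*N+3" using n by simp
    have "1+a+of_nat (N+1+n) \<noteq> 0" using c j by blast
    moreover have "1 + a + of_nat N + 1 + of_nat n = 1+a+of_nat (N+1+n)" by simp
    ultimately show "1 + a + of_nat N + 1 + of_nat n \<noteq> 0" by (simp add: add_ac)
    have "1 + a + of_nat N \<noteq> 0" using c by auto
    then show "1 + a + of_nat N \<noteq> 0" .
    have j2: "N+n \<le> 2*N+3" using n by simp
    have "1+a+of_nat (N+n) \<noteq> 0" using c j2 by blast
    then show "1 + a + of_nat N + of_nat n \<noteq> 0" by (simp add: add_ac)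
    show "pochhammer (1 + a + of_nat N) n \<noteq> 0"
    proof
      assume "pochhammer (1 + a + of_nat N) n = 0"
      then obtain k where k: "k < n" "1 + a + of_nat N = - of_nat k" by (auto simp: pochhammer_eq_0_iff)
      have "1 + a + of_nat (N + k) = (1 + a + of_nat N) + of_nat k" by (simp add: add_ac)
      also have "\<dots> = 0" using k(2) by simp
      finally have "1 + a + of_nat (N + k) = 0" .
      moreover have "N + k \<le> 2*N+3" using k n by auto
      ultimately show False using c by blast
    qed
  qed
  have "(\<Sum>n<Suc (Suc N). (1+a-b+of_nat N)*(1+a-d+of_nat N) * TT a b d (Suc N) n - (1+a+of_nat N)*(1+a-b-d+of_nat N) * TT a b d N n)
     = (\<Sum>n<Suc (Suc N). HH a b d N (Suc n) - HH a b d N n)"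
    using loc by (intro sum.cong) auto
  also have "\<dots> = HH a b d N (Suc (Suc N)) - HH a b d N 0"
    by (rule sum_lessThan_telescope)
  also have "\<dots> = 0"
    unfolding HH_def by (simp add: UU_vanish)
  finally have z: "(1+a-b+of_nat N)*(1+a-d+of_nat N) * (\<Sum>n<Suc (Suc N). TT a b d (Suc N) n)
     - (1+a+of_nat N)*(1+a-b-d+of_nat N) * (\<Sum>n<Suc (Suc N). TT a b d N n) = 0"
    by (simp only: sum_subtractf sum_distrib_left)
  have "(\<Sum>n<Suc (Suc N). TT a b d N n) = (\<Sum>n<Suc N. TT a b d N n)"
    using TT_vanish[of N "Suc N" a b d] by simp
  with z show ?thesis by simp
qed

lemma dougall_gen:
  assumes a0: "a \<noteq> 0"
    and c: "\<forall>j\<le>2*N+2. 1+a-b+of_nat j \<noteq> 0 \<and> 1+a-d+of_nat j \<noteq> 0 \<and> 1+a+of_nat j \<noteq> 0"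
  shows "(\<Sum>n<Suc N. TT a b d N n) * (pochhammer (1+a-b) N * pochhammer (1+a-d) N)
       = pochhammer (1+a) N * pochhammer (1+a-b-d) N"
  using c
proof (induction N)
  case 0
  then show ?case using a0 by (simp add: TT_def UU_def)
next
  case (Suc N)
  have cN: "\<forall>j\<le>2*N+2. 1+a-b+of_nat j \<noteq> 0 \<and> 1+a-d+of_nat j \<noteq> 0 \<and> 1+a+of_nat j \<noteq> 0"
    using Suc.prems by auto
  have c3: "\<forall>j\<le>2*N+3. 1+a-b+of_nat j \<noteq> 0 \<and> 1+a-d+of_nat j \<noteq> 0 \<and> 1+a+of_nat j \<noteq> 0"
    using Suc.prems by auto
  note IH = Suc.IH[OF cN]
  note R = recur[OF a0 c3]
  have "(\<Sum>n<Suc (Suc N). TT a b d (Suc N) n) * (pochhammer (1+a-b) (Suc N) * pochhammer (1+a-d) (Suc N))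
      = ((1+a-b+of_nat N)*(1+a-d+of_nat N) * (\<Sum>n<Suc (Suc N). TT a b d (Suc N) n)) * (pochhammer (1+a-b) N * pochhammer (1+a-d) N)"
    by (simp add: pochhammer_Suc algebra_simps)
  also have "\<dots> = (1+a+of_nat N)*(1+a-b-d+of_nat N) * ((\<Sum>n<Suc N. TT a b d N n) * (pochhammer (1+a-b) N * pochhammer (1+a-d) N))"
    unfolding R by (simp only: mult_ac)
  also have "\<dots> = pochhammer (1+a) (Suc N) * pochhammer (1+a-b-d) (Suc N)"
    unfolding IH by (simp add: pochhammer_Suc algebra_simps)
  finally show ?case .
qed

lemma isCont_poch_comp [continuous_intros]:
  fixes f :: "complex \<Rightarrow> complex"
  shows "isCont f a \<Longrightarrow> isCont (\<lambda>x. pochhammer (f x) n) a"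
  by (rule isCont_o2[OF _ isCont_pochhammer])

lemma ev_ne: "eventually (\<lambda>x::complex. x + c \<noteq> 0) (at a)"
proof -
  have "eventually (\<lambda>x::complex. x \<noteq> - c) (at a)" by (rule eventually_neq_at_within)
  then show ?thesis by (rule eventually_mono) (auto simp: add_eq_0_iff)
qed

lemma dougall:
  assumes a0: "a \<noteq> 0" and pb: "pochhammer (1+a-b) N \<noteq> 0" and pd: "pochhammer (1+a-d) N \<noteq> 0"
    and pk: "pochhammer (1+a+of_nat N) N \<noteq> 0"
  shows "(\<Sum>n<Suc N. TT a b d N n) = pochhammer (1+a) N * pochhammer (1+a-b-d) N / (pochhammer (1+a-b) N * pochhammer (1+a-d) N)"
proof -
  define \<phi> where "\<phi> x = (\<Sum>n<Suc N. TT x b d N n) * (pochhammer (1+x-b) N * pochhammer (1+x-d) N)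
       - pochhammer (1+x) N * pochhammer (1+x-b-d) N" for x
  have cont: "isCont \<phi> a"
    unfolding \<phi>_def TT_def UU_def
  proof (intro continuous_intros)
    fix n assume "n \<in> {..<Suc N}"
    then have "n \<le> N" by simp
    then show "pochhammer (1 + a - b) n * pochhammer (1 + a - d) n * pochhammer (1 + a + of_nat N) n * fact n \<noteq> 0"
      using pb pd pk pochhammer_neq_0_mono by auto
  qed (use a0 in auto)
  have ev: "eventually (\<lambda>x. \<phi> x = 0) (at a)"
  proof -
    have e1: "eventually (\<lambda>x::complex. x + 0 \<noteq> 0) (at a)" by (rule ev_ne)
    have e2: "eventually (\<lambda>x. \<forall>j\<in>{..2*N+2}. x + (1-b+of_nat j) \<noteq> 0 \<and> x + (1-d+of_nat j) \<noteq> 0 \<and> x + (1+of_nat j) \<noteq> 0) (at a)"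
      by (intro eventually_ball_finite ballI eventually_conj ev_ne) auto
    show ?thesis
    proof (rule eventually_mono[OF eventually_conj[OF e1 e2]])
      fix x assume h: "x + 0 \<noteq> 0 \<and> (\<forall>j\<in>{..2*N+2}. x + (1-b+of_nat j) \<noteq> 0 \<and> x + (1-d+of_nat j) \<noteq> 0 \<and> x + (1+of_nat j) \<noteq> 0)"
      have "\<forall>j\<le>2*N+2. 1+x-b+of_nat j \<noteq> 0 \<and> 1+x-d+of_nat j \<noteq> 0 \<and> 1+x+of_nat j \<noteq> 0"
      proof (intro allI impI)
        fix j assume "j \<le> 2*N+2"
        then have "x + (1-b+of_nat j) \<noteq> 0 \<and> x + (1-d+of_nat j) \<noteq> 0 \<and> x + (1+of_nat j) \<noteq> 0" using h by auto
        then show "1+x-b+of_nat j \<noteq> 0 \<and> 1+x-d+of_nat j \<noteq> 0 \<and> 1+x+of_nat j \<noteq> 0"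
          by (simp add: algebra_simps)
      qed
      from dougall_gen[OF _ this] h show "\<phi> x = 0" unfolding \<phi>_def by simp
    qed
  qed
  have "(\<phi> \<longlongrightarrow> \<phi> a) (at a)" using cont by (simp add: isCont_def)
  moreover have "(\<phi> \<longlongrightarrow> 0) (at a)" using ev by (rule tendsto_eventually)
  ultimately have "\<phi> a = 0" by (rule LIM_unique)
  then show ?thesis using pb pd unfolding \<phi>_def by (simp add: field_simps)
qed

lemma poch_nz: "x \<notin> \<int>\<^sub>\<le>\<^sub>0 \<Longrightarrow> pochhammer (x::complex) n \<noteq> 0"
  by (auto simp: pochhammer_eq_0_iff)

lemma shift:
  assumes a0: "a \<noteq> 0" and a2: "a + 2 \<noteq> 0"
    and pb: "pochhammer (1+a-b) (Suc m) \<noteq> 0" and pd: "pochhammer (1+a-d) (Suc m) \<noteq> 0"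
    and pk: "pochhammer (1+a+of_nat (Suc M)) (Suc m) \<noteq> 0"
  shows "of_nat (Suc m) * (a + of_nat (Suc m)) * TT a b d (Suc M) (Suc m)
      = (a+1)*(a+2)*b*d*(- of_nat (Suc M)) / ((1+a-b)*(1+a-d)*(2+a+of_nat M)) * TT (a+2) (b+1) (d+1) M m"
proof -
  have r1: "pochhammer (1+a-b) (Suc m) = (1+a-b) * pochhammer (1+(a+2)-(b+1)) m"
    using pochhammer_rec[of "1+a-b" m] by (simp add: algebra_simps)
  have r2: "pochhammer (1+a-d) (Suc m) = (1+a-d) * pochhammer (1+(a+2)-(d+1)) m"
    using pochhammer_rec[of "1+a-d" m] by (simp add: algebra_simps)
  have r3: "pochhammer (1+a+of_nat (Suc M)) (Suc m) = (2+a+of_nat M) * pochhammer (1+(a+2)+of_nat M) m"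
    using pochhammer_rec[of "1+a+of_nat (Suc M)" m] by (simp add: algebra_simps)
  have r4: "pochhammer (- of_nat (Suc M) :: complex) (Suc m) = (- of_nat (Suc M)) * pochhammer (- of_nat M) m"
    using pochhammer_rec[of "- of_nat (Suc M) :: complex" m] by (simp add: add.commute)
  have rb: "pochhammer b (Suc m) = b * pochhammer (b+1) m" by (rule pochhammer_rec)
  have rd: "pochhammer d (Suc m) = d * pochhammer (d+1) m" by (rule pochhammer_rec)
  have ra: "pochhammer a (Suc m) = a * pochhammer (a+1) m" by (rule pochhammer_rec)
  have rel: "(a+1) * pochhammer (a+2) m = (a + 1 + of_nat m) * pochhammer (a+1) m"
    using poch_shift[of "a+1" m] by (simp add: add.assoc)
  have rf: "fact (Suc m) = of_nat (Suc m) * (fact m :: complex)" by simp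
  have nz1: "1+a-b \<noteq> 0" "pochhammer (1+(a+2)-(b+1)) m \<noteq> 0" using pb r1 by auto
  have nz2: "1+a-d \<noteq> 0" "pochhammer (1+(a+2)-(d+1)) m \<noteq> 0" using pd r2 by auto
  have nz3: "2+a+of_nat M \<noteq> 0" "pochhammer (1+(a+2)+of_nat M) m \<noteq> 0" using pk r3 by auto
  have nzf: "(fact m :: complex) \<noteq> 0" "(of_nat (Suc m) :: complex) \<noteq> 0"
    by simp (metis of_nat_eq_0_iff nat.distinct(1))
  show ?thesis
    unfolding TT_def UU_def r1 r2 r3 r4 rb rd ra rf
    using nz1 nz2 nz3 nzf a0 a2 rel
    by (simp add: divide_simps) (intro disjI2, (thin_tac "_ \<noteq> _")+, algebra)
qed

lemma poch_nz2:
  assumes "x \<notin> \<int>\<^sub>\<le>\<^sub>0" "y = x + of_nat k"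
  shows "pochhammer (y::complex) n \<noteq> 0"
proof
  assume "pochhammer y n = 0"
  then obtain j where "y = - of_nat j" by (auto simp: pochhammer_eq_0_iff)
  then have e: "x + of_nat k = - of_nat j" using assms(2) by simp
  have "x + of_nat (k + j) = (x + of_nat k) + of_nat j" by (simp add: add_ac)
  also have "\<dots> = 0" using e by simp
  finally have "x + of_nat (k + j) = 0" .
  then have "x \<in> \<int>\<^sub>\<le>\<^sub>0" by (rule plus_of_nat_eq_0_imp)
  with assms(1) show False by simp
qed

lemma nz_of: "x \<notin> \<int>\<^sub>\<le>\<^sub>0 \<Longrightarrow> y = x + of_nat k \<Longrightarrow> (y::complex) \<noteq> 0"
  using plus_of_nat_eq_0_imp by fastforce

lemma final_alg:
  fixes a b d f g m A2 A3 X B2 D2 :: complex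
  assumes nz: "1+a-b \<noteq> 0" "1+a-d \<noteq> 0" "B2 \<noteq> 0" "D2 \<noteq> 0" "2+a+m \<noteq> 0" "a-f \<noteq> 0" "f \<noteq> 0" "g \<noteq> 0"
     "f*(a-f) - d*b \<noteq> 0"
    and gd: "g = f*(b+d-a)*(f-a) / (f*(a-f) - d*b)"
    and rel: "(1+a+1) * A3 = (1+a+1+m) * A2"
  shows "(1+a)*A2 * (X*(1+a-b-d+m)) / ((1+a-b)*B2*((1+a-d)*D2))
     + (a+1)*(a+2)*b*d*(-(m+1)) / ((1+a-b)*(1+a-d)*(2+a+m)) * (A3*X/(B2*D2)) / ((a-f)*f)
     = (1+a)*A2*((a-b-d)*X) / ((1+a-b)*B2*((1+a-d)*D2)) * ((g+(m+1))/g)"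
proof -
  have g2: "g * (f*(a-f) - d*b) = f*(b+d-a)*(f-a)" using gd nz(9) by simp
  have r2: "(a+2) * A3 = (2+a+m) * A2" using rel by (simp add: algebra_simps)
  define K where "K = (1+a)*A2*X / ((1+a-b)*B2*((1+a-d)*D2))"
  have t1: "(1+a)*A2 * (X*(1+a-b-d+m)) / ((1+a-b)*B2*((1+a-d)*D2)) = K*(1+a-b-d+m)"
    unfolding K_def by simp
  have t2: "(a+1)*(a+2)*b*d*(-(m+1)) / ((1+a-b)*(1+a-d)*(2+a+m)) * (A3*X/(B2*D2)) / ((a-f)*f)
      = K * (-(m+1)*b*d/(f*(a-f)))"
  proof -
    have "(a+1)*(a+2)*b*d*(-(m+1)) / ((1+a-b)*(1+a-d)*(2+a+m)) * (A3*X/(B2*D2)) / ((a-f)*f)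
       = (a+1)*((a+2)*A3)*X*(-(m+1)*b*d) / ((1+a-b)*B2*((1+a-d)*D2)*(2+a+m)*(f*(a-f)))"
      by (simp add: mult_ac)
    also have "\<dots> = (a+1)*((2+a+m)*A2)*X*(-(m+1)*b*d) / ((1+a-b)*B2*((1+a-d)*D2)*(2+a+m)*(f*(a-f)))"
      unfolding r2 ..
    also have "\<dots> = K * (-(m+1)*b*d/(f*(a-f)))"
      unfolding K_def using nz(5) by (simp add: mult_ac)
    finally show ?thesis .
  qed
  have t3: "(1+a)*A2*((a-b-d)*X) / ((1+a-b)*B2*((1+a-d)*D2)) * ((g+(m+1))/g) = K * ((a-b-d)*((g+(m+1))/g))"
    unfolding K_def by (simp add: mult_ac)
  have s1: "(a-b-d) * (f*(a-f)) = g * (f*(a-f) - d*b)" using g2 by (simp add: algebra_simps)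
  have s2: "(a-b-d)*((g+(m+1))/g) = (a-b-d) + (m+1) * ((f*(a-f) - d*b)/(f*(a-f)))"
  proof -
    have "(a-b-d)*((g+(m+1))/g) = (a-b-d) + (m+1)*((a-b-d)/g)" using nz(8) by (simp add: field_simps)
    also have "(a-b-d)/g = (f*(a-f) - d*b)/(f*(a-f))"
      using s1 nz(6) nz(7) nz(8) by (simp add: divide_simps)
    finally show ?thesis .
  qed
  have s3: "(1+a-b-d+m) + (-(m+1)*b*d/(f*(a-f))) = (a-b-d)*((g+(m+1))/g)"
    unfolding s2 using nz(6) nz(7) by (simp add: field_simps)
  show ?thesis
    unfolding t1 t2 t3 s3[symmetric] by (simp add: distrib_left)
qed

theorem mainTheorem1:
  fixes a b d f :: complex and N :: nat
  assumes lower: "\<forall>x\<in>{a/2, 1+a-b, f, 1+a-d, a-f, 1+a+of_nat N}. x \<notin> \<int>\<^sub>\<le>\<^sub>0"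
    and den: "f*(a-f) - d*b \<noteq> 0"
    and gN: "pochhammer (f*(b+d-a)*(f-a) / (f*(a-f) - d*b)) N \<noteq> 0"
  shows "hypergeom [a, 1 + a/2, b, a-f+1, d, f+1, - of_nat N]
                   [a/2, 1+a-b, f, 1+a-d, a-f, 1+a+of_nat N] 1 =
    (let g = f*(b+d-a)*(f-a) / (f*(a-f) - d*b) in
      pochhammer (1+a) N * pochhammer (a-b-d) N / (pochhammer (1+a-b) N * pochhammer (1+a-d) N)
      * (pochhammer (g+1) N / pochhammer g N))"
proof -
  have l1: "a/2 \<notin> \<int>\<^sub>\<le>\<^sub>0" "1+a-b \<notin> \<int>\<^sub>\<le>\<^sub>0" "f \<notin> \<int>\<^sub>\<le>\<^sub>0" "1+a-d \<notin> \<int>\<^sub>\<le>\<^sub>0"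
     "a-f \<notin> \<int>\<^sub>\<le>\<^sub>0" "1+a+of_nat N \<notin> \<int>\<^sub>\<le>\<^sub>0" using lower by auto
  have a0: "a \<noteq> 0" using l1(1) by auto
  have a2: "a + 2 \<noteq> 0"
  proof
    assume "a + 2 = 0"
    then have "a = - 2" by (simp only: add_eq_0_iff2)
    then have "a/2 = -1" by simp
    then show False using l1(1) by simp
  qed
  have f0: "f \<noteq> 0" using l1(3) by auto
  have af0: "a - f \<noteq> 0" using l1(5) by auto
  have pz: "pochhammer (a/2) n \<noteq> 0" "pochhammer (1+a-b) n \<noteq> 0" "pochhammer f n \<noteq> 0"
     "pochhammer (1+a-d) n \<noteq> 0" "pochhammer (a-f) n \<noteq> 0" "pochhammer (1+a+of_nat N) n \<noteq> 0" for n
    using l1 poch_nz by auto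
  define t where "t n = prod_list (map (\<lambda>a. pochhammer a n) [a, 1 + a/2, b, a-f+1, d, f+1, - of_nat N]) /
      prod_list (map (\<lambda>b. pochhammer b n) [a/2, 1+a-b, f, 1+a-d, a-f, 1+a+of_nat N]) * 1 ^ n / fact n" for n
  have hyp: "hypergeom [a, 1 + a/2, b, a-f+1, d, f+1, - of_nat N]
                   [a/2, 1+a-b, f, 1+a-d, a-f, 1+a+of_nat N] 1 = (\<Sum>n<Suc N. t n)"
  proof -
    have "hypergeom [a, 1 + a/2, b, a-f+1, d, f+1, - of_nat N]
                   [a/2, 1+a-b, f, 1+a-d, a-f, 1+a+of_nat N] 1 = suminf t"
      unfolding hypergeom_def t_def ..
    also have "\<dots> = (\<Sum>n\<in>{..<Suc N}. t n)"
      by (rule suminf_finite) (auto simp: t_def pochhammer_of_nat_eq_0_lemma)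
    finally show ?thesis .
  qed
  have tn: "t n = TT a b d N n + of_nat n * (a + of_nat n) * TT a b d N n / ((a-f)*f)" for n
  proof -
    have h1: "(a/2) * pochhammer (1 + a/2) n = (a/2 + of_nat n) * pochhammer (a/2) n"
      using poch_shift[of "a/2" n] by (simp only: add.commute)
    have a20: "a/2 \<noteq> 0" using a0 by simp
    have s1: "pochhammer (1 + a/2) n = (a/2 + of_nat n) * pochhammer (a/2) n / (a/2)"
      using h1 a20 by (metis nonzero_mult_div_cancel_left)
    have s2: "pochhammer (a-f+1) n = (a-f + of_nat n) * pochhammer (a-f) n / (a-f)"
      using poch_shift[of "a-f" n] af0 by (simp add: field_simps)
    have s3: "pochhammer (f+1) n = (f + of_nat n) * pochhammer f n / f"
      using poch_shift[of "f" n] f0 by (simp add: field_simps)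
    have fn: "(fact n :: complex) \<noteq> 0" by simp
    have hA: "pochhammer (a * inverse 2) n * inverse (pochhammer (a * inverse 2) n) = 1"
      using right_inverse[OF pz(1)[of n]] by (simp only: divide_inverse)
    have two_inv: "2 * inverse 2 = (1::complex)" by simp
    show ?thesis
      unfolding t_def TT_def UU_def
      apply (simp only: list.map prod_list.Cons prod_list.Nil s1 s2 s3 power_one mult_1_right div_by_1)
      apply (simp only: divide_inverse inverse_mult_distrib inverse_inverse_eq)
      using hA two_inv right_inverse[OF pz(2)[of n]] right_inverse[OF pz(3)[of n]]
        right_inverse[OF pz(4)[of n]] right_inverse[OF pz(5)[of n]] right_inverse[OF pz(6)[of n]]
        right_inverse[OF fn] right_inverse[OF a0] right_inverse[OF f0] right_inverse[OF af0]
      by algebra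
  qed
  have sumt: "(\<Sum>n<Suc N. t n) = (\<Sum>n<Suc N. TT a b d N n)
      + (\<Sum>n<Suc N. of_nat n * (a + of_nat n) * TT a b d N n) / ((a-f)*f)"
    unfolding tn by (simp only: sum.distrib sum_divide_distrib)
  have D1: "(\<Sum>n<Suc N. TT a b d N n) = pochhammer (1+a) N * pochhammer (1+a-b-d) N / (pochhammer (1+a-b) N * pochhammer (1+a-d) N)"
    by (rule dougall[OF a0 pz(2) pz(4) pz(6)])
  show ?thesis
  proof (cases N)
    case 0
    then show ?thesis using hyp by (simp add: t_def)
  next
    case (Suc M)
    define g where "g = f*(b+d-a)*(f-a) / (f*(a-f) - d*b)"
    have gN': "pochhammer g (Suc M) \<noteq> 0" using gN Suc g_def by simp
    have g0: "g \<noteq> 0" using gN' by (auto simp: pochhammer_rec)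
    have gq: "pochhammer (g+1) (Suc M) / pochhammer g (Suc M) = (g + of_nat (Suc M)) / g"
      using poch_shift[of g "Suc M"] gN' g0 by (simp add: field_simps)
    have sh: "(\<Sum>n<Suc (Suc M). of_nat n * (a + of_nat n) * TT a b d (Suc M) n)
       = (a+1)*(a+2)*b*d*(- of_nat (Suc M)) / ((1+a-b)*(1+a-d)*(2+a+of_nat M)) * (\<Sum>m<Suc M. TT (a+2) (b+1) (d+1) M m)"
    proof -
      have "(\<Sum>n<Suc (Suc M). of_nat n * (a + of_nat n) * TT a b d (Suc M) n)
          = (\<Sum>m<Suc M. of_nat (Suc m) * (a + of_nat (Suc m)) * TT a b d (Suc M) (Suc m))"
        by (subst sum.lessThan_Suc_shift) simp
      also have "\<dots> = (\<Sum>m<Suc M. (a+1)*(a+2)*b*d*(- of_nat (Suc M)) / ((1+a-b)*(1+a-d)*(2+a+of_nat M)) * TT (a+2) (b+1) (d+1) M m)"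
      proof (rule sum.cong[OF refl])
        fix m assume "m \<in> {..<Suc M}"
        show "of_nat (Suc m) * (a + of_nat (Suc m)) * TT a b d (Suc M) (Suc m)
          = (a+1)*(a+2)*b*d*(- of_nat (Suc M)) / ((1+a-b)*(1+a-d)*(2+a+of_nat M)) * TT (a+2) (b+1) (d+1) M m"
          by (rule shift[OF a0 a2 pz(2) pz(4)]) (use pz(6) Suc in simp)
      qed
      also have "\<dots> = (a+1)*(a+2)*b*d*(- of_nat (Suc M)) / ((1+a-b)*(1+a-d)*(2+a+of_nat M)) * (\<Sum>m<Suc M. TT (a+2) (b+1) (d+1) M m)"
        by (rule sum_distrib_left[symmetric])
      finally show ?thesis .
    qed
    have D2: "(\<Sum>m<Suc M. TT (a+2) (b+1) (d+1) M m) = pochhammer (1+(a+2)) M * pochhammer (1+(a+2)-(b+1)-(d+1)) M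
        / (pochhammer (1+(a+2)-(b+1)) M * pochhammer (1+(a+2)-(d+1)) M)"
    proof (rule dougall[OF a2])
      show "pochhammer (1 + (a + 2) - (b + 1)) M \<noteq> 0" by (rule poch_nz2[OF l1(2), of _ 1]) simp
      show "pochhammer (1 + (a + 2) - (d + 1)) M \<noteq> 0" by (rule poch_nz2[OF l1(4), of _ 1]) simp
      show "pochhammer (1 + (a + 2) + of_nat M) M \<noteq> 0" by (rule poch_nz2[OF l1(6), of _ 1]) (simp add: Suc)
    qed
    have E1: "hypergeom [a, 1 + a/2, b, a-f+1, d, f+1, - of_nat N]
                   [a/2, 1+a-b, f, 1+a-d, a-f, 1+a+of_nat N] 1 = (\<Sum>n<Suc N. TT a b d N n)
      + (\<Sum>n<Suc N. of_nat n * (a + of_nat n) * TT a b d N n) / ((a-f)*f)"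
      by (simp only: hyp sumt)
    have p1: "pochhammer (1+a) (Suc M) = (1+a) * pochhammer (1+a+1) M" by (rule pochhammer_rec)
    have p2: "pochhammer (a-b-d) (Suc M) = (a-b-d) * pochhammer (1+a-b-d) M"
      using pochhammer_rec[of "a-b-d" M] by (simp add: algebra_simps)
    have p3: "pochhammer (1+a-b) (Suc M) = (1+a-b) * pochhammer (1+(a+2)-(b+1)) M"
      using pochhammer_rec[of "1+a-b" M] by (simp add: algebra_simps)
    have p4: "pochhammer (1+a-d) (Suc M) = (1+a-d) * pochhammer (1+(a+2)-(d+1)) M"
      using pochhammer_rec[of "1+a-d" M] by (simp add: algebra_simps)
    have p5: "pochhammer (1+a-b-d) (Suc M) = pochhammer (1+a-b-d) M * (1+a-b-d+of_nat M)"
      by (rule pochhammer_Suc)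
    have p6: "pochhammer (1+(a+2)-(b+1)-(d+1)) M = pochhammer (1+a-b-d) M"
      by (simp add: algebra_simps)
    have rel: "(1+a+1) * pochhammer (1+(a+2)) M = (1+a+1+of_nat M) * pochhammer (1+a+1) M"
      using poch_shift[of "1+a+1" M] by (simp add: algebra_simps)
    have nzB: "pochhammer (1+(a+2)-(b+1)) M \<noteq> 0" by (rule poch_nz2[OF l1(2), of _ 1]) simp
    have nzD: "pochhammer (1+(a+2)-(d+1)) M \<noteq> 0" by (rule poch_nz2[OF l1(4), of _ 1]) simp
    have nzb: "1+a-b \<noteq> 0" using l1(2) by auto
    have nzd: "1+a-d \<noteq> 0" using l1(4) by auto
    have nzk: "2+a+of_nat M \<noteq> 0" by (rule nz_of[OF l1(6), of _ 0]) (simp add: Suc)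
    have gd: "g = f*(b+d-a)*(f-a) * inverse (f*(a-f) - d*b)" unfolding g_def by (simp only: divide_inverse)
    have sM: "(of_nat (Suc M) :: complex) = of_nat M + 1" by simp
    note FA = final_alg[OF nzb nzd nzB nzD nzk af0 f0 g0 den g_def rel]
    show ?thesis
      apply (unfold E1 D1 Let_def g_def[symmetric])
      apply (unfold Suc)
      apply (unfold sh D2 gq p1 p2 p3 p4 p5 p6)
      apply (unfold sM)
      by (rule FA[of "pochhammer (1+a-b-d) M"])
  qed
qed
end
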